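(* Let $\eta_l\in(0,1]$ and $M\in[0,1]$ be fixed. For $\beta\in[0,1]$ put $r(\beta):=1-\eta_l+M(1-\beta)$, $\zeta(\beta):=M(1-\beta)^2$ and $$\lambda_1(\beta):=\frac{r(\beta)+\beta+\sqrt{(r(\beta)-\beta)^2-4\zeta(\beta)}}{2},$$ where for a negative radicand $D$ the square root is $i\sqrt{|D|}$. Then $$\operatorname*{argmin}_{\beta\in[0,1]}|\lambda_1(\beta)|=\begin{cases}1-\dfrac{\eta_l}{(1-\sqrt M)^2}&\text{if }0\le M\le(1-\sqrt{\eta_l})^2,\\[4pt] 0&\text{if }(1-\sqrt{\eta_l})^2<M\le 1-\eta_l,\\[4pt] 1-\dfrac{\eta_l}{(1+\sqrt M)^2}&\text{if }1-\eta_l\le M\le1.\end{cases}$$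
   Context: In the paper, $\eta_l=\sigma_l^2/\|A\|_F^2$ for the $l$-th largest singular value $\sigma_l$ of a matrix $A$, and $\lambda_1$ is the eigenvalue of larger modulus of the $2\times2$ matrix $\begin{bmatrix} r&\zeta\\-1&\beta\end{bmatrix}$; $|\cdot|$ denotes the modulus of a complex number. *)

theory Defs
  imports "HOL-Analysis.Analysis"
begin

definition r_fun :: "real \<Rightarrow> real \<Rightarrow> real \<Rightarrow> real" where
  "r_fun eta M beta = 1 - eta + M * (1 - beta)"

definition zeta_fun :: "real \<Rightarrow> real \<Rightarrow> real" where
  "zeta_fun M beta = M * (1 - beta)^2"

definition sqrt_rad :: "real \<Rightarrow> complex" where
  "sqrt_rad D = (if D \<ge> 0 then complex_of_real (sqrt D) else \<i> * complex_of_real (sqrt \<bar>D\<bar>))"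

definition lambda1 :: "real \<Rightarrow> real \<Rightarrow> real \<Rightarrow> complex" where
  "lambda1 eta M beta =
     (complex_of_real (r_fun eta M beta + beta)
      + sqrt_rad ((r_fun eta M beta - beta)^2 - 4 * zeta_fun M beta)) / 2"

end

theory Submission imports Defs begin

definition LL :: "real \<Rightarrow> real \<Rightarrow> complex" where
 "LL S D = (complex_of_real S + sqrt_rad D) / 2"

lemma LL_pos: "D \<ge> 0 \<Longrightarrow> LL S D = complex_of_real ((S + sqrt D)/2)"
  by (simp add: LL_def sqrt_rad_def)

lemma LL_neg: "D < 0 \<Longrightarrow> LL S D = Complex (S/2) (sqrt (-D)/2)"
  by (simp add: LL_def sqrt_rad_def complex_eq_iff)

lemma LL_ge_half: assumes "S \<ge> 0" shows "cmod (LL S D) \<ge> S/2"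
proof (cases "D \<ge> 0")
  case True
  have "cmod (LL S D) = \<bar>(S + sqrt D)/2\<bar>" unfolding LL_pos[OF True] norm_of_real ..
  thus ?thesis using assms True by simp
next
  case False
  hence "cmod (LL S D) = sqrt ((S/2)^2 + (sqrt (-D)/2)^2)" by (simp add: LL_neg cmod_def)
  also have "\<dots> \<ge> sqrt ((S/2)^2)" by (intro real_sqrt_le_mono) simp
  finally show ?thesis using assms by simp
qed

lemma LL_sq_neg: assumes "D \<le> 0" shows "(cmod (LL S D))^2 = (S^2 - D)/4"
proof (cases "D = 0")
  case True thus ?thesis by (simp add: LL_pos power_divide)
next
  case False
  hence "cmod (LL S D) = sqrt ((S/2)^2 + (sqrt (-D)/2)^2)" using assms by (simp add: LL_neg cmod_def)
  moreover have "(S/2)^2 + (sqrt (-D)/2)^2 = (S^2-D)/4" using assms by (simp add: power_divide)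
  moreover have "S^2-D \<ge> 0" using assms zero_le_power2[of S] by linarith
  hence "(S^2-D)/4 \<ge> 0" by simp
  ultimately show ?thesis by simp
qed

lemma LL_sq_ge: assumes "S \<ge> 0" shows "(cmod (LL S D))^2 \<ge> (S^2 - D)/4"
proof (cases "D \<ge> 0")
  case True
  have "cmod (LL S D) = \<bar>(S + sqrt D)/2\<bar>" unfolding LL_pos[OF True] norm_of_real ..
  hence "cmod (LL S D) = (S + sqrt D)/2" using True assms by simp
  moreover have "((S + sqrt D)/2)^2 \<ge> (S^2 - D)/4"
    using True assms by (simp add: power_divide power2_eq_square algebra_simps)
  ultimately show ?thesis by metis
qed (simp add: LL_sq_neg)

lemma LL_ge_root: assumes "S \<ge> 0" "(2*c - S)^2 \<le> D" shows "cmod (LL S D) \<ge> c"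
proof -
  have D: "D \<ge> 0" using assms(2) by (smt (verit) zero_le_power2)
  have "\<bar>2*c - S\<bar> \<le> sqrt D" using assms(2) real_le_rsqrt by (metis abs_ge_zero power2_abs real_sqrt_abs real_sqrt_le_mono)
  hence "c \<le> (S + sqrt D)/2" by (simp add: abs_le_iff)
  moreover have "cmod (LL S D) = \<bar>(S + sqrt D)/2\<bar>" unfolding LL_pos[OF D] norm_of_real ..
  ultimately show ?thesis using D assms by simp
qed

lemma lam_eq: "lambda1 eta M b = LL (2 - eta + (M - 1)*(1-b)) ((2 - eta + (M - 1)*(1-b))^2 - 4*(1 - eta - (1-b)*(1-eta-M)))"
proof -
  have "(r_fun eta M b - b)^2 - 4 * zeta_fun M b = (2 - eta + (M - 1)*(1-b))^2 - 4*(1 - eta - (1-b)*(1-eta-M))"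
    by (simp add: r_fun_def zeta_fun_def power2_eq_square algebra_simps)
  moreover have "r_fun eta M b + b = 2 - eta + (M - 1)*(1-b)" by (simp add: r_fun_def algebra_simps)
  ultimately show ?thesis by (simp add: lambda1_def LL_def)
qed

definition SS :: "real \<Rightarrow> real \<Rightarrow> real \<Rightarrow> real" where
  "SS e M t = 2 - e + (M - 1)*t"
definition PP :: "real \<Rightarrow> real \<Rightarrow> real \<Rightarrow> real" where
  "PP e M t = 1 - e - t*(1-e-M)"

lemma lam_eq2: "lambda1 e M b = LL (SS e M (1-b)) ((SS e M (1-b))^2 - 4 * PP e M (1-b))"
  by (simp add: lam_eq SS_def PP_def)

lemma SS_nonneg: assumes "e \<le> 1" "0 \<le> M" "M \<le> 1" "0 \<le> t" "t \<le> 1" shows "SS e M t \<ge> 0"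
proof -
  have "(1 - M) * t \<le> 1" using assms by (simp add: mult_le_one)
  thus ?thesis using assms by (simp add: SS_def algebra_simps)
qed

lemma PP_diff: "PP e M t - PP e M u = (t - u) * (M - 1 + e)"
  by (simp add: PP_def algebra_simps)
lemma SS_diff: "SS e M t - SS e M u = (M - 1) * (t - u)"
  by (simp add: SS_def algebra_simps)

lemma argmin_from: fixes f :: "real \<Rightarrow> real" assumes "x \<in> {0..1}" "f x = c" "\<And>y. y \<in> {0..1} \<Longrightarrow> f y \<ge> c"
  shows "is_arg_min f (\<lambda>b. b \<in> {0..(1::real)}) x"
  unfolding is_arg_min_def
proof (intro conjI notI)
  show "x \<in> {0..1}" by fact
  assume "\<exists>y. y \<in> {0..1} \<and> f y < f x"
  then obtain y where "y \<in> {0..1}" "f y < f x" by blast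
  thus False using assms(2) assms(3)[of y] by linarith
qed

lemma sq_ge: "(0::real) \<le> c \<Longrightarrow> 0 \<le> a \<Longrightarrow> c^2 \<le> a^2 \<Longrightarrow> c \<le> a"
  using power2_le_imp_le by blast

lemma case3:
  fixes e M s :: real
  assumes e: "0 < e" "e \<le> 1" and M: "0 \<le> M" "M \<le> 1" and s: "0 \<le> s" "M = s^2" and h: "1 - e \<le> M"
  shows "is_arg_min (\<lambda>b. cmod (lambda1 e M b)) (\<lambda>b. b \<in> {0..1}) (1 - e / (1 + s)^2)"
proof -
  define t1 where "t1 = e / (1+s)^2"
  define c where "c = 1 - e / (1+s)"
  have ps: "(1+s)^2 \<ge> 1" using s by (simp add: power2_eq_square algebra_simps)
  have t1: "0 \<le> t1" "t1 \<le> 1" using e ps by (auto simp: t1_def divide_le_eq_1)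
  have c0: "c \<ge> 0" using e s by (simp add: c_def field_simps)
  have q: "1 + s > 0" using s by simp
  have m1: "M - 1 = (s-1)*(1+s)" by (simp add: s(2) power2_eq_square algebra_simps)
  have a1: "(M - 1)*(e/(1+s)^2) = (s-1)*e/(1+s)" using q unfolding m1
    by (simp add: power2_eq_square)
  have a2: "(s-1)*e/(1+s) = e - 2*e/(1+s)" using q by (simp add: field_simps)
  have St1: "SS e M t1 = 2*c" unfolding SS_def t1_def c_def a1 a2 by simp
  define w where "w = 1/(1+s)"
  have sw: "s*w = 1 - w" using q by (simp add: w_def field_simps)
  have tw: "t1 = e*w^2" by (simp add: t1_def w_def power2_eq_square)
  have cw: "c = 1 - e*w" by (simp add: c_def w_def)
  have Pt1: "PP e M t1 = c^2" unfolding PP_def tw cw s(2) using sw by algebra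
  show ?thesis
  proof (rule argmin_from[where c=c])
    show "1 - e / (1 + s)^2 \<in> {0..1}" using t1 by (simp add: t1_def)
    have tt: "1 - (1 - e / (1 + s)^2) = t1" by (simp add: t1_def)
    have L1: "lambda1 e M (1 - e / (1 + s)^2) = LL (2*c) 0"
      unfolding lam_eq2 tt St1 Pt1 by (simp add: power_mult_distrib)
    have "cmod (lambda1 e M (1 - e / (1 + s)^2)) ^2 = c^2"
      unfolding L1 using LL_sq_neg[of 0 "2*c"] by (simp add: power_mult_distrib)
    thus "cmod (lambda1 e M (1 - e / (1 + s)^2)) = c" using c0 norm_ge_zero
      power2_eq_imp_eq by blast
  next
    fix y :: real assume y: "y \<in> {0..1}"
    define t where "t = 1 - y"
    have t: "0 \<le> t" "t \<le> 1" using y by (auto simp: t_def)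
    have S0: "SS e M t \<ge> 0" using SS_nonneg[OF e(2) M t] .
    have L: "lambda1 e M y = LL (SS e M t) ((SS e M t)^2 - 4 * PP e M t)" by (simp add: lam_eq2 t_def)
    show "c \<le> cmod (lambda1 e M y)"
    proof (cases "t \<le> t1")
      case True
      have "SS e M t - SS e M t1 \<ge> 0" unfolding SS_diff using M True
        by (simp add: mult_nonpos_nonpos)
      thus ?thesis using LL_ge_half[OF S0, of "(SS e M t)^2 - 4 * PP e M t"] St1 L by simp
    next
      case False
      have "PP e M t - PP e M t1 \<ge> 0" unfolding PP_diff using h False by simp
      hence "c^2 \<le> (cmod (lambda1 e M y))^2"
        using LL_sq_ge[OF S0, of "(SS e M t)^2 - 4 * PP e M t"] Pt1 L by simp
      thus ?thesis by (rule sq_ge[OF c0 norm_ge_zero])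
    qed
  qed
qed


lemma case1:
  fixes e M s :: real
  assumes e: "0 < e" "e \<le> 1" and M: "0 \<le> M" "M \<le> 1" and s: "0 \<le> s" "M = s^2" and h: "s \<le> 1 - sqrt e"
  shows "is_arg_min (\<lambda>b. cmod (lambda1 e M b)) (\<lambda>b. b \<in> {0..1}) (1 - e / (1 - s)^2)"
proof -
  define q where "q = 1 - s"
  have se: "sqrt e \<le> q" using h by (simp add: q_def)
  have se0: "sqrt e > 0" using e by simp
  have q0: "q > 0" using se se0 by linarith
  have q1: "q \<le> 1" using s by (simp add: q_def)
  have eq2: "e \<le> q^2" using se se0 by (metis less_imp_le power_mono real_sqrt_pow2 e(1))
  have ee: "e \<le> sqrt e"
  proof -
    have "sqrt e * sqrt e \<le> 1 * sqrt e" using e by (intro mult_right_mono) auto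
    thus ?thesis using e by simp
  qed
  have Me: "M \<le> 1 - e"
  proof -
    have "s^2 \<le> (1 - sqrt e)^2" using h s by (simp add: power_mono)
    also have "\<dots> = 1 - 2 * sqrt e + e" using e by (simp add: power2_eq_square algebra_simps)
    finally show ?thesis using s ee by linarith
  qed
  define a where "a = e / q"
  have ea: "e = a * q" using q0 by (simp add: a_def)
  define t2 where "t2 = e / q^2"
  have t2a: "t2 = a / q" by (simp add: t2_def a_def power2_eq_square)
  define c where "c = 1 - a"
  have t2: "0 \<le> t2" "t2 \<le> 1" using e eq2 q0 by (auto simp: t2_def divide_le_eq_1)
  have a0: "a \<le> 1"
  proof -
    have "e \<le> q" using ee se by linarith
    thus ?thesis using q0 by (simp add: a_def divide_le_eq_1)
  qed
  have c0: "c \<ge> 0" using a0 by (simp add: c_def)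
  define w where "w = 1/q"
  have qw: "q*w = 1" using q0 by (simp add: w_def)
  have aw: "a = e*w" by (simp add: a_def w_def)
  have tw: "t2 = e*w^2" by (simp add: t2_def w_def power2_eq_square)
  have sq: "s = 1 - q" by (simp add: q_def)
  have St2: "SS e M t2 = 2*c" unfolding SS_def tw c_def aw s(2) sq using qw by algebra
  have Pt2: "PP e M t2 = c^2" unfolding PP_def tw c_def aw s(2) sq using qw by algebra
  show ?thesis
  proof (rule argmin_from[where c=c])
    show "1 - e / (1 - s)^2 \<in> {0..1}" using t2 by (simp add: t2_def q_def)
    have tt: "1 - (1 - e / (1 - s)^2) = t2" by (simp add: t2_def q_def)
    have L1: "lambda1 e M (1 - e / (1 - s)^2) = LL (2*c) 0"
      unfolding lam_eq2 tt St2 Pt2 by (simp add: power_mult_distrib)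
    have "cmod (lambda1 e M (1 - e / (1 - s)^2)) ^2 = c^2"
      unfolding L1 using LL_sq_neg[of 0 "2*c"] by (simp add: power_mult_distrib)
    thus "cmod (lambda1 e M (1 - e / (1 - s)^2)) = c" using c0 norm_ge_zero
      power2_eq_imp_eq by blast
  next
    fix y :: real assume y: "y \<in> {0..1}"
    define t where "t = 1 - y"
    have t: "0 \<le> t" "t \<le> 1" using y by (auto simp: t_def)
    have S0: "SS e M t \<ge> 0" using SS_nonneg[OF e(2) M t] .
    have L: "lambda1 e M y = LL (SS e M t) ((SS e M t)^2 - 4 * PP e M t)" by (simp add: lam_eq2 t_def)
    show "c \<le> cmod (lambda1 e M y)"
    proof (cases "t \<le> t2")
      case True
      have "PP e M t - PP e M t2 \<ge> 0" unfolding PP_diff using Me True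
        by (simp add: mult_nonpos_nonpos)
      hence "c^2 \<le> (cmod (lambda1 e M y))^2"
        using LL_sq_ge[OF S0, of "(SS e M t)^2 - 4 * PP e M t"] Pt2 L by simp
      thus ?thesis by (rule sq_ge[OF c0 norm_ge_zero])
    next
      case False
      have pc: "c^2 - SS e M t * c + PP e M t = s * a * (a - q * t)"
        unfolding SS_def PP_def c_def s(2) sq ea by algebra
      have "q * t \<ge> a" using False q0 t2a by (simp add: field_simps)
      hence "s * a * (a - q * t) \<le> 0" using s a0 ea e q0
        by (metis diff_ge_0_iff_ge mult_nonneg_nonneg mult_nonneg_nonpos zero_le_mult_iff less_imp_le
          linorder_not_le diff_le_0_iff_le)
      hence "(2*c - SS e M t)^2 \<le> (SS e M t)^2 - 4 * PP e M t" using pc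
        by (simp add: power2_eq_square algebra_simps)
      thus ?thesis using LL_ge_root[OF S0] L by simp
    qed
  qed
qed

lemma case2:
  fixes e M s :: real
  assumes e: "0 < e" "e \<le> 1" and M: "0 \<le> M" "M \<le> 1" and s: "0 \<le> s" "M = s^2"
    and h1: "1 - sqrt e < s" and h2: "M \<le> 1 - e"
  shows "is_arg_min (\<lambda>b. cmod (lambda1 e M b)) (\<lambda>b. b \<in> {0..1}) 0"
proof (rule argmin_from[where c=s])
  show "(0::real) \<in> {0..1}" by simp
  have s1: "s \<le> 1" using M s by (metis abs_of_nonneg real_sqrt_abs real_sqrt_le_1_iff)
  have "(1 - s)^2 < (sqrt e)^2" using h1 s1 by (intro power_strict_mono) auto
  hence A: "(1 - s)^2 - e < 0" using e by simp
  have "(1+s)^2 \<ge> 1" using s by (simp add: power2_eq_square algebra_simps)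
  hence B: "(1 + s)^2 - e \<ge> 0" using e by linarith
  have D: "(SS e M 1)^2 - 4 * PP e M 1 = ((1 - s)^2 - e) * ((1 + s)^2 - e)"
    unfolding SS_def PP_def s(2) by (simp add: power2_eq_square algebra_simps)
  have D0: "(SS e M 1)^2 - 4 * PP e M 1 \<le> 0" unfolding D using A B
    by (simp add: mult_nonpos_nonneg)
  have "cmod (lambda1 e M 0) ^2 = ((SS e M 1)^2 - ((SS e M 1)^2 - 4 * PP e M 1))/4"
    using LL_sq_neg[OF D0, of "SS e M 1"] by (simp add: lam_eq2)
  also have "\<dots> = s^2" by (simp add: PP_def s(2))
  finally show "cmod (lambda1 e M 0) = s" using s norm_ge_zero power2_eq_imp_eq by blast
next
  fix y :: real assume y: "y \<in> {0..1}"
  define t where "t = 1 - y"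
  have t: "0 \<le> t" "t \<le> 1" using y by (auto simp: t_def)
  have S0: "SS e M t \<ge> 0" using SS_nonneg[OF e(2) M t] .
  have L: "lambda1 e M y = LL (SS e M t) ((SS e M t)^2 - 4 * PP e M t)" by (simp add: lam_eq2 t_def)
  have "PP e M t - PP e M 1 \<ge> 0" unfolding PP_diff using h2 t
    by (simp add: mult_nonpos_nonpos)
  moreover have "PP e M 1 = s^2" by (simp add: PP_def s(2))
  ultimately have "s^2 \<le> (cmod (lambda1 e M y))^2"
    using LL_sq_ge[OF S0, of "(SS e M t)^2 - 4 * PP e M t"] L by simp
  thus "s \<le> cmod (lambda1 e M y)" by (rule sq_ge[OF s(1) norm_ge_zero])
qed

theorem corollary1p3:
  fixes eta M :: real
  assumes "0 < eta" "eta \<le> 1" "0 \<le> M" "M \<le> 1"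
  shows "(M \<le> (1 - sqrt eta)^2 \<longrightarrow>
            is_arg_min (\<lambda>b. cmod (lambda1 eta M b)) (\<lambda>b. b \<in> {0..1})
              (1 - eta / (1 - sqrt M)^2))
       \<and> ((1 - sqrt eta)^2 < M \<and> M \<le> 1 - eta \<longrightarrow>
            is_arg_min (\<lambda>b. cmod (lambda1 eta M b)) (\<lambda>b. b \<in> {0..1}) 0)
       \<and> (1 - eta \<le> M \<longrightarrow>
            is_arg_min (\<lambda>b. cmod (lambda1 eta M b)) (\<lambda>b. b \<in> {0..1})
              (1 - eta / (1 + sqrt M)^2))"
proof (intro conjI impI)
  have s0: "sqrt M \<ge> 0" using assms(3) by simp
  have sM: "M = (sqrt M)^2" by (rule real_sqrt_pow2[symmetric, OF assms(3)])
  have se1: "0 \<le> 1 - sqrt eta" using assms by simp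
  show "is_arg_min (\<lambda>b. cmod (lambda1 eta M b)) (\<lambda>b. b \<in> {0..1}) (1 - eta / (1 + sqrt M)^2)"
    if "1 - eta \<le> M" using case3[OF assms s0 sM that] .
  show "is_arg_min (\<lambda>b. cmod (lambda1 eta M b)) (\<lambda>b. b \<in> {0..1}) (1 - eta / (1 - sqrt M)^2)"
    if h: "M \<le> (1 - sqrt eta)^2"
  proof -
    have "sqrt M \<le> sqrt ((1 - sqrt eta)^2)" using h by (rule real_sqrt_le_mono)
    hence "sqrt M \<le> 1 - sqrt eta" using se1 by simp
    thus ?thesis using case1[OF assms s0 sM] by blast
  qed
  show "is_arg_min (\<lambda>b. cmod (lambda1 eta M b)) (\<lambda>b. b \<in> {0..1}) 0"
    if h: "(1 - sqrt eta)^2 < M \<and> M \<le> 1 - eta"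
  proof -
    have "sqrt ((1 - sqrt eta)^2) < sqrt M" using h by (simp only: real_sqrt_less_iff)
    hence "1 - sqrt eta < sqrt M" using se1 by simp
    thus ?thesis using case2[OF assms s0 sM] h by blast
  qed
qed

end
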